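(* Let $(X,\|\cdot\|)$ be a finite-dimensional Banach space. Then $X$ is convex if and only if for every sequence $\{v_n\}_{n\in\mathbb{N}}$ of vectors in $X$ such that $\|v_{n+m}\|\le\|v_n+v_m\|$ for all $n,m\in\mathbb{N}$, the limit $\lim_{n\to\infty}\frac{v_n}{n}$ exists.
   Context: $\mathbb{N}=\{1,2,3,\dots\}$. A Banach space $X$ is called convex if for all $u,v\in X$ with $u\neq v$ and $\|u\|=\|v\|=1$ we have $\|u+v\|<2$. *)

theory Defs
  imports "HOL-Analysis.Analysis"
begin

text \<open>A normed space is convex (strictly convex) if distinct unit vectors
  u, v satisfy norm (u + v) < 2.\<close>
definition convex_normed_space :: "'a::real_normed_vector itself \<Rightarrow> bool" where
  "convex_normed_space _ \<longleftrightarrow>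
     (\<forall>u v::'a. u \<noteq> v \<and> norm u = 1 \<and> norm v = 1 \<longrightarrow> norm (u + v) < 2)"

end

theory Submission
  imports Defs
begin

lemma BW:
  fixes S :: "'a::real_normed_vector set"
  assumes "finite S"
  shows "\<forall>x. bounded (range x) \<and> (\<forall>n. x n \<in> span S) \<longrightarrow>
           (\<exists>l\<in>span S. \<exists>r::nat\<Rightarrow>nat. strict_mono r \<and> (x \<circ> r) \<longlonglongrightarrow> l)"
  using assms
proof (induction S rule: finite_induct)
  case empty
  show ?case
  proof (intro allI impI)
    fix x :: "nat \<Rightarrow> 'a"
    assume "bounded (range x) \<and> (\<forall>n. x n \<in> span {})"
    then have "\<forall>n. x n = 0" by simp
    then have "(x \<circ> id) \<longlonglongrightarrow> 0" by (simp add: o_def)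
    then show "\<exists>l\<in>span {}. \<exists>r::nat\<Rightarrow>nat. strict_mono r \<and> (x \<circ> r) \<longlonglongrightarrow> l"
      using strict_mono_id span_zero by blast
  qed
next
  case (insert b S)
  have closedS: "closed (span S)"
    unfolding closed_sequential_limits
  proof (intro allI impI)
    fix y :: "nat \<Rightarrow> 'a" and l
    assume a: "(\<forall>n. y n \<in> span S) \<and> y \<longlonglongrightarrow> l"
    then have "bounded (range y)"
      using Bseq_eq_bounded convergent_imp_Bseq convergentI by blast
    with a insert.IH obtain l' r where l': "l' \<in> span S" "strict_mono r" "(y \<circ> r) \<longlonglongrightarrow> l'"
      by blast
    have "(y \<circ> r) \<longlonglongrightarrow> l" using a l'(2) LIMSEQ_subseq_LIMSEQ by blast
    then have "l = l'" using l'(3) LIMSEQ_unique by blast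
    then show "l \<in> span S" using l' by simp
  qed
  show ?case
  proof (cases "b \<in> span S")
    case True
    then show ?thesis using insert.IH span_redundant by metis
  next
    case False
    define d where "d = infdist b (span S)"
    have dpos: "d > 0" unfolding d_def
      using infdist_pos_not_in_closed[OF closedS _ False] span_zero by blast
    show ?thesis
    proof (intro allI impI)
      fix x :: "nat \<Rightarrow> 'a"
      assume xa: "bounded (range x) \<and> (\<forall>n. x n \<in> span (insert b S))"
      have "\<forall>n. \<exists>t. x n - t *\<^sub>R b \<in> span S"
        using xa span_insert[of b S] by auto
      then obtain t where t: "\<forall>n. x n - t n *\<^sub>R b \<in> span S" by metis
      define y where "y n = x n - t n *\<^sub>R b" for n
      have yS: "\<forall>n. y n \<in> span S" using t y_def by simp
      obtain B where B: "\<forall>n. norm (x n) \<le> B" using xa bounded_iff by (metis rangeI)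
      have tb: "\<bar>t n\<bar> * d \<le> norm (x n)" for n
      proof (cases "t n = 0")
        case True then show ?thesis by simp
      next
        case False
        have xn: "x n = t n *\<^sub>R b + y n" using y_def by simp
        have mem: "- (1 / t n) *\<^sub>R y n \<in> span S"
          using yS span_scale span_neg by blast
        have "x n = t n *\<^sub>R (b - (- (1 / t n) *\<^sub>R y n))"
          using False xn by (simp add: algebra_simps)
        then have "norm (x n) = \<bar>t n\<bar> * dist b (- (1 / t n) *\<^sub>R y n)"
          by (simp add: dist_norm)
        moreover have "d \<le> dist b (- (1 / t n) *\<^sub>R y n)"
          unfolding d_def using infdist_le[OF mem] .
        ultimately show ?thesis by (simp add: mult_left_mono)
      qed
      have tB: "\<bar>t n\<bar> \<le> B / d" for n
        using tb[of n] B dpos by (simp add: field_simps) (meson order_trans)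
      have "bounded (range t)"
        unfolding bounded_iff using tB by (metis real_norm_def rangeE)
      then obtain l1 r1 where r1: "strict_mono (r1::nat\<Rightarrow>nat)" "(t \<circ> r1) \<longlonglongrightarrow> l1"
        using bounded_imp_convergent_subsequence by blast
      have yB: "norm (y n) \<le> B + B / d * norm b" for n
      proof -
        have "norm (y n) \<le> norm (x n) + norm (t n *\<^sub>R b)"
          unfolding y_def by (rule norm_triangle_ineq4)
        also have "\<dots> \<le> B + B / d * norm b"
          using B[rule_format, of n] mult_right_mono[OF tB[of n] norm_ge_zero[of b]] by simp
        finally show ?thesis .
      qed
      have "bounded (range (y \<circ> r1))"
        unfolding bounded_iff using yB by auto
      then obtain l2 r2 where r2: "l2 \<in> span S" "strict_mono (r2::nat\<Rightarrow>nat)" "(y \<circ> r1 \<circ> r2) \<longlonglongrightarrow> l2"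
        using insert.IH yS by (metis comp_apply)
      have t12: "(t \<circ> r1 \<circ> r2) \<longlonglongrightarrow> l1"
        using r1(2) r2(2) LIMSEQ_subseq_LIMSEQ by blast
      have eq: "x \<circ> (r1 \<circ> r2) = (\<lambda>k. (t \<circ> r1 \<circ> r2) k *\<^sub>R b + (y \<circ> r1 \<circ> r2) k)"
        by (auto simp: y_def)
      have "(x \<circ> (r1 \<circ> r2)) \<longlonglongrightarrow> l1 *\<^sub>R b + l2"
        unfolding eq by (intro tendsto_intros t12 r2(3))
      moreover have "l1 *\<^sub>R b + l2 \<in> span (insert b S)"
        by (meson r2(1) span_add span_base span_mono span_scale insertI1 subset_insertI subsetD)
      moreover have "strict_mono (r1 \<circ> r2)" using r1(1) r2(2) strict_mono_o by blast
      ultimately show "\<exists>l\<in>span (insert b S). \<exists>r::nat\<Rightarrow>nat. strict_mono r \<and> (x \<circ> r) \<longlonglongrightarrow> l"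
        by blast
    qed
  qed
qed

lemma UC:
  fixes L :: real
  assumes fin: "finite B" "span B = (UNIV::'a::real_normed_vector set)"
    and cvx: "convex_normed_space TYPE('a)"
    and L0: "L \<ge> 0" and e0: "\<epsilon> > 0"
  shows "\<exists>\<eta>>0. \<forall>x y::'a. norm x \<le> L + \<eta> \<longrightarrow> norm y \<le> L + \<eta> \<longrightarrow>
            2 * L - \<eta> \<le> norm (x + y) \<longrightarrow> norm (x - y) < \<epsilon>"
proof (rule ccontr)
  assume "\<not> ?thesis"
  then have "\<forall>k::nat. \<exists>x y::'a. norm x \<le> L + inverse (real (Suc k)) \<and> norm y \<le> L + inverse (real (Suc k)) \<and>
            2 * L - inverse (real (Suc k)) \<le> norm (x + y) \<and> \<epsilon> \<le> norm (x - y)"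
    by (metis not_less inverse_positive_iff_positive of_nat_0_less_iff zero_less_Suc)
  then obtain X Y :: "nat \<Rightarrow> 'a" where XY: "\<And>k. norm (X k) \<le> L + inverse (real (Suc k))"
     "\<And>k. norm (Y k) \<le> L + inverse (real (Suc k))"
     "\<And>k. 2 * L - inverse (real (Suc k)) \<le> norm (X k + Y k)" "\<And>k. \<epsilon> \<le> norm (X k - Y k)"
    by metis
  have invle: "inverse (real (Suc k)) \<le> 1" for k by (simp add: inverse_le_1_iff)
  have bX: "norm (X k) \<le> L + 1" "norm (Y k) \<le> L + 1" for k
    using XY(1)[of k] XY(2)[of k] invle[of k] by linarith+
  have "bounded (range X)" unfolding bounded_iff
    using bX by blast
  then obtain l1 r1 where r1: "strict_mono (r1::nat\<Rightarrow>nat)" "(X \<circ> r1) \<longlonglongrightarrow> l1"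
    using BW[OF fin(1)] fin(2) by blast
  have "bounded (range (Y \<circ> r1))" unfolding bounded_iff
    using bX by auto
  then obtain l2 r2 where r2: "strict_mono (r2::nat\<Rightarrow>nat)" "(Y \<circ> r1 \<circ> r2) \<longlonglongrightarrow> l2"
    using BW[OF fin(1)] fin(2) by blast
  define r where "r = r1 \<circ> r2"
  have X: "(\<lambda>k. X (r k)) \<longlonglongrightarrow> l1"
    using LIMSEQ_subseq_LIMSEQ[OF r1(2) r2(1)] by (simp add: r_def o_def)
  have Y: "(\<lambda>k. Y (r k)) \<longlonglongrightarrow> l2"
    using r2(2) by (simp add: r_def o_def)
  have sm: "strict_mono r" unfolding r_def using r1(1) r2(1) strict_mono_o by blast
  have I: "(\<lambda>k. inverse (real (Suc (r k)))) \<longlonglongrightarrow> 0"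
    using LIMSEQ_subseq_LIMSEQ[OF LIMSEQ_inverse_real_of_nat sm] by (simp add: o_def)
  have n1: "norm l1 \<le> L"
  proof -
    have "(\<lambda>k. L + inverse (real (Suc (r k)))) \<longlonglongrightarrow> L + 0" by (intro tendsto_intros I)
    then show ?thesis using LIMSEQ_le[OF tendsto_norm[OF X]] XY(1) by fastforce
  qed
  have n2: "norm l2 \<le> L"
  proof -
    have "(\<lambda>k. L + inverse (real (Suc (r k)))) \<longlonglongrightarrow> L + 0" by (intro tendsto_intros I)
    then show ?thesis using LIMSEQ_le[OF tendsto_norm[OF Y]] XY(2) by fastforce
  qed
  have n3: "2 * L \<le> norm (l1 + l2)"
  proof -
    have "(\<lambda>k. 2 * L - inverse (real (Suc (r k)))) \<longlonglongrightarrow> 2 * L - 0" by (intro tendsto_intros I)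
    then show ?thesis using LIMSEQ_le[OF _ tendsto_norm[OF tendsto_add[OF X Y]]] XY(3) by fastforce
  qed
  have n4: "\<epsilon> \<le> norm (l1 - l2)"
    using LIMSEQ_le_const[OF tendsto_norm[OF tendsto_diff[OF X Y]]] XY(4) by fastforce
  have tri: "norm (l1 + l2) \<le> norm l1 + norm l2" by (rule norm_triangle_ineq)
  show False
  proof (cases "L = 0")
    case True
    then show ?thesis using n1 n2 n4 e0 by simp
  next
    case False
    then have Lp: "L > 0" using L0 by simp
    have e1: "norm l1 = L" "norm l2 = L" using n1 n2 n3 tri by linarith+
    have ne: "l1 \<noteq> l2" using n4 e0 by auto
    define u where "u = (1 / L) *\<^sub>R l1"
    define v where "v = (1 / L) *\<^sub>R l2"
    have "u \<noteq> v" using ne Lp unfolding u_def v_def by simp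
    moreover have "norm u = 1" "norm v = 1" using e1 Lp by (simp_all add: u_def v_def)
    moreover have "norm (u + v) = norm (l1 + l2) / L"
      using Lp by (simp add: u_def v_def scaleR_add_right[symmetric])
    moreover have "norm (l1 + l2) / L \<ge> 2" using n3 Lp by (simp add: field_simps)
    ultimately show False using cvx unfolding convex_normed_space_def by fastforce
  qed
qed

lemma fekete:
  fixes a :: "nat \<Rightarrow> real"
  assumes nonneg: "\<And>n. a n \<ge> 0"
    and sub: "\<And>n m. n \<ge> 1 \<Longrightarrow> m \<ge> 1 \<Longrightarrow> a (n + m) \<le> a n + a m"
    and eta: "\<eta> > 0"
  shows "\<exists>N\<ge>1. \<forall>n\<ge>N. a n / real n \<le> Inf {a n / real n | n. n \<ge> 1} + \<eta>"
proof -
  define S where "S = {a n / real n | n. n \<ge> 1}"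
  have Sne: "S \<noteq> {}" unfolding S_def by auto
  have Sbdd: "bdd_below S" unfolding S_def bdd_below_def using nonneg by (auto intro!: exI[of _ 0])
  have "Inf S < Inf S + \<eta> / 2" using eta by simp
  then obtain x where "x \<in> S" "x < Inf S + \<eta> / 2"
    using cInf_less_iff[OF Sne Sbdd] by blast
  then obtain k where k: "k \<ge> 1" "a k / real k < Inf S + \<eta> / 2"
    unfolding S_def by blast
  define C where "C = (\<Sum>r<k. a r)"
  have Cr: "r < k \<Longrightarrow> a r \<le> C" for r
    unfolding C_def using nonneg by (intro member_le_sum) auto
  have C0: "C \<ge> 0" unfolding C_def using nonneg by (simp add: sum_nonneg)
  have claim: "n \<ge> 1 \<longrightarrow> a n \<le> real (n div k) * a k + C" for n
  proof (induction n rule: less_induct)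
    case (less n)
    show ?case
    proof (cases "n < k")
      case True
      then show ?thesis using Cr by simp
    next
      case False
      show ?thesis
      proof (cases "n = k")
        case True
        then show ?thesis using k C0 by simp
      next
        case False
        with \<open>\<not> n < k\<close> have nk: "n > k" by simp
        have ih: "a (n - k) \<le> real ((n - k) div k) * a k + C"
          using less.IH[of "n - k"] nk k by auto
        have dv: "n div k = Suc ((n - k) div k)"
          using nk k by (simp add: le_div_geq)
        have "a n = a ((n - k) + k)" using nk by simp
        also have "\<dots> \<le> a (n - k) + a k" using sub[of "n - k" k] nk k by simp
        finally show ?thesis using ih dv by (simp add: algebra_simps)
      qed
    qed
  qed
  define N where "N = nat \<lceil>2 * C / \<eta>\<rceil> + 1"
  have N1: "N \<ge> 1" unfolding N_def by simp
  have NC: "2 * C / \<eta> < real N" unfolding N_def by linarith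
  have "\<forall>n\<ge>N. a n / real n \<le> Inf S + \<eta>"
  proof (intro allI impI)
    fix n assume nN: "n \<ge> N"
    then have n1: "n \<ge> 1" using N1 by simp
    have npos: "real n > 0" using n1 by simp
    have "real (n div k) * real k \<le> real n"
      by (metis div_times_less_eq_dividend of_nat_le_iff of_nat_mult)
    then have q: "real (n div k) \<le> real n / real k" using k by (simp add: field_simps)
    have "a n / real n \<le> (real (n div k) * a k + C) / real n"
      using claim[of n] n1 npos by (simp add: divide_right_mono)
    also have "\<dots> = real (n div k) * a k / real n + C / real n" by (simp add: add_divide_distrib)
    also have "real (n div k) * a k / real n \<le> (real n / real k) * a k / real n"
      using divide_right_mono[OF mult_right_mono[OF q nonneg[of k]], of "real n"] npos by simp
    also have "(real n / real k) * a k / real n = a k / real k" using npos by simp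
    also have "C / real n \<le> \<eta> / 2"
    proof -
      have "2 * C / \<eta> < real n" using NC nN by linarith
      then have "2 * C < \<eta> * real n" using eta by (simp add: field_simps)
      then show ?thesis using npos by (simp add: field_simps)
    qed
    finally show "a n / real n \<le> Inf S + \<eta>" using k(2) by linarith
  qed
  then show ?thesis using N1 unfolding S_def by blast
qed

lemma seg_norm:
  fixes u v :: "'a::real_normed_vector"
  assumes "norm u = 1" "norm v = 1" "2 \<le> norm (u + v)" "a \<ge> 0" "b \<ge> 0"
  shows "a + b \<le> norm (a *\<^sub>R u + b *\<^sub>R v)"
proof (cases "b \<le> a")
  case True
  have "a *\<^sub>R (u + v) = (a *\<^sub>R u + b *\<^sub>R v) + (a - b) *\<^sub>R v" by (simp add: algebra_simps)
  then have "norm (a *\<^sub>R (u + v)) \<le> norm (a *\<^sub>R u + b *\<^sub>R v) + (a - b)"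
    using norm_triangle_ineq[of "a *\<^sub>R u + b *\<^sub>R v" "(a - b) *\<^sub>R v"] True assms by simp
  moreover have "norm (a *\<^sub>R (u + v)) \<ge> 2 * a" using assms by (simp add: mult_left_mono mult.commute)
  ultimately show ?thesis by linarith
next
  case False
  have "b *\<^sub>R (u + v) = (a *\<^sub>R u + b *\<^sub>R v) + (b - a) *\<^sub>R u" by (simp add: algebra_simps)
  then have "norm (b *\<^sub>R (u + v)) \<le> norm (a *\<^sub>R u + b *\<^sub>R v) + (b - a)"
    using norm_triangle_ineq[of "a *\<^sub>R u + b *\<^sub>R v" "(b - a) *\<^sub>R u"] False assms by simp
  moreover have "norm (b *\<^sub>R (u + v)) \<ge> 2 * b" using assms by (simp add: mult_left_mono mult.commute)
  ultimately show ?thesis by linarith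
qed

lemma sum_shift_lessThan:
  fixes g :: "nat \<Rightarrow> real"
  shows "(\<Sum>j<p. g (Suc j)) = (\<Sum>j<p. g j) + g p - g 0"
  by (induction p) auto

theorem mainTheorem2:
  assumes fin_dim: "\<exists>B::'a::banach set. finite B \<and> span B = UNIV"
  shows "convex_normed_space TYPE('a) \<longleftrightarrow>
    (\<forall>v::nat \<Rightarrow> 'a.
       (\<forall>n m. n \<ge> 1 \<longrightarrow> m \<ge> 1 \<longrightarrow> norm (v (n + m)) \<le> norm (v n + v m)) \<longrightarrow>
       convergent (\<lambda>n. (1 / real n) *\<^sub>R v n))"
proof -
  obtain B :: "'a set" where fin: "finite B" "span B = UNIV" using fin_dim by blast
  show ?thesis
  proof
    assume cvx: "convex_normed_space TYPE('a)"
    show "\<forall>v::nat \<Rightarrow> 'a.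
       (\<forall>n m. n \<ge> 1 \<longrightarrow> m \<ge> 1 \<longrightarrow> norm (v (n + m)) \<le> norm (v n + v m)) \<longrightarrow>
       convergent (\<lambda>n. (1 / real n) *\<^sub>R v n)"
    proof (intro allI impI)
      fix v :: "nat \<Rightarrow> 'a"
      assume H: "\<forall>n m. n \<ge> 1 \<longrightarrow> m \<ge> 1 \<longrightarrow> norm (v (n + m)) \<le> norm (v n + v m)"
      define a where "a n = norm (v n)" for n
      have a0: "a n \<ge> 0" for n unfolding a_def by simp
      have sub: "a (n + m) \<le> a n + a m" if "n \<ge> 1" "m \<ge> 1" for n m
        using H that norm_triangle_ineq[of "v n" "v m"] unfolding a_def by (meson order_trans)
      define L where "L = Inf {a n / real n | n. n \<ge> 1}"
      have Sne: "{a n / real n | n. n \<ge> 1} \<noteq> {}" by auto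
      have Sbdd: "bdd_below {a n / real n | n. n \<ge> 1}"
        unfolding bdd_below_def using a0 by (auto intro!: exI[of _ 0])
      have L_le: "L \<le> a n / real n" if "n \<ge> 1" for n
        unfolding L_def using that by (intro cInf_lower[OF _ Sbdd]) auto
      have L0: "0 \<le> L" unfolding L_def using a0 by (intro cInf_greatest[OF Sne]) auto
      have a_ge: "real n * L \<le> a n" if "n \<ge> 1" for n
        using L_le[OF that] that by (simp add: field_simps)
      define u where "u = (\<lambda>n. (1 / real n) *\<^sub>R v n)"
      have nu: "norm (u n) = a n / real n" for n unfolding u_def a_def by simp
      have vu: "v n = real n *\<^sub>R u n" if "n \<ge> 1" for n unfolding u_def using that by simp
      define D where "D p m = (a m + real p * L - a (p + m)) / real p" for p m
      have key: "2 * L - D p m \<le> norm (u p + u m)" if pm: "1 \<le> p" "p \<le> m" for p m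
      proof -
        have e: "v p + v m = real p *\<^sub>R (u p + u m) + (real m - real p) *\<^sub>R u m"
          using vu[of p] vu[of m] pm by (simp add: algebra_simps)
        have "a (p + m) \<le> norm (v p + v m)" using H pm unfolding a_def by simp
        also have "\<dots> \<le> norm (real p *\<^sub>R (u p + u m)) + norm ((real m - real p) *\<^sub>R u m)"
          unfolding e by (rule norm_triangle_ineq)
        also have "\<dots> = real p * norm (u p + u m) + (real m - real p) * (a m / real m)"
          using pm by (simp add: nu)
        also have "(real m - real p) * (a m / real m) = a m - real p * (a m / real m)"
          using pm by (simp add: field_simps)
        finally have i0: "a (p + m) \<le> real p * norm (u p + u m) + (a m - real p * (a m / real m))" .
        have "real p * (a m / real m) \<ge> real p * L"
          using mult_left_mono[OF L_le[of m], of "real p"] pm by simp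
        with i0 have i: "a (p + m) \<le> real p * norm (u p + u m) + a m - real p * L" by linarith
        have "real p * (2 * L - D p m) = real p * L + a (p + m) - a m"
          using pm unfolding D_def by (simp add: field_simps)
        with i have "real p * (2 * L - D p m) \<le> real p * norm (u p + u m)" by linarith
        then show ?thesis using pm by simp
      qed
      have "Cauchy u"
      proof (rule metric_CauchyI)
        fix \<epsilon> :: real assume e0: "0 < \<epsilon>"
        obtain \<eta> where eta: "\<eta> > 0" and UCe: "\<forall>x y::'a. norm x \<le> L + \<eta> \<longrightarrow> norm y \<le> L + \<eta> \<longrightarrow>
            2 * L - \<eta> \<le> norm (x + y) \<longrightarrow> norm (x - y) < \<epsilon> / 2"
          using UC[OF fin cvx L0, of "\<epsilon> / 2"] e0 by auto
        obtain N0 where N0: "N0 \<ge> 1" and Nb: "\<forall>n\<ge>N0. a n / real n \<le> L + \<eta> / 3"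
          using fekete[of a "\<eta> / 3", OF a0 sub] eta unfolding L_def by auto
        show "\<exists>M. \<forall>m\<ge>M. \<forall>n\<ge>M. dist (u m) (u n) < \<epsilon>"
        proof (intro exI allI impI)
          fix n n' assume nN: "n \<ge> N0" and nN': "n' \<ge> N0"
          define M where "M = max n n'"
          have M1: "M \<ge> 1" using nN N0 unfolding M_def by simp
          define F where "F p = (\<Sum>j<p. a (M + j))" for p
          have sumD: "(\<Sum>i<K. D p (M + i)) \<le> F p / real p" if p1: "p \<ge> 1" for p K
          proof -
            define G where "G K = (\<Sum>j<p. a (M + K + j))" for K
            have tele: "(\<Sum>i<K. (a (M + i) - a (p + (M + i)))) = F p - G K" for K
            proof (induction K)
              case 0
              then show ?case by (simp add: F_def G_def)
            next
              case (Suc K)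
              have "G (Suc K) = G K + a (M + K + p) - a (M + K)"
                unfolding G_def using sum_shift_lessThan[of "\<lambda>j. a (M + K + j)" p] by simp
              then show ?case using Suc by (simp add: add.commute add.left_commute)
            qed
            have GK: "G K \<ge> real p * (real K * L)"
            proof -
              have "real K * L \<le> a (M + K + j)" for j
              proof -
                have "real K * L \<le> real (M + K + j) * L" using L0 by (intro mult_right_mono) auto
                also have "\<dots> \<le> a (M + K + j)" using a_ge[of "M + K + j"] M1 by linarith
                finally show ?thesis .
              qed
              then have "(\<Sum>j<p. real K * L) \<le> G K" unfolding G_def by (intro sum_mono) auto
              then show ?thesis by simp
            qed
            have "(\<Sum>i<K. real p * D p (M + i)) = (\<Sum>i<K. (a (M + i) - a (p + (M + i))) + real p * L)"
              using p1 unfolding D_def by (intro sum.cong) auto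
            also have "\<dots> = F p - G K + real K * (real p * L)"
              by (simp add: sum.distrib tele)
            also have "\<dots> \<le> F p" using GK by (simp add: algebra_simps)
            finally have "real p * (\<Sum>i<K. D p (M + i)) \<le> F p" by (simp add: sum_distrib_left)
            then show ?thesis using p1 by (simp add: field_simps)
          qed
          define C where "C = F n / real n + F n' / real n'"
          define K where "K = nat \<lceil>3 * C / \<eta>\<rceil> + 1"
          have KC: "3 * C / \<eta> < real K" unfolding K_def by linarith
          have KC': "C < real K * (\<eta> / 3)" using KC eta by (simp add: field_simps)
          have n1: "n \<ge> 1" "n' \<ge> 1" using nN nN' N0 by auto
          have "\<exists>i<K. D n (M + i) + D n' (M + i) < \<eta> / 3"
          proof (rule ccontr)
            assume "\<not> ?thesis"
            then have "\<forall>i\<in>{..<K}. \<eta> / 3 \<le> D n (M + i) + D n' (M + i)" by auto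
            then have "real K * (\<eta> / 3) \<le> (\<Sum>i<K. D n (M + i) + D n' (M + i))"
              using sum_bounded_below[of "{..<K}" "\<eta> / 3" "\<lambda>i. D n (M + i) + D n' (M + i)"] by simp
            also have "\<dots> = (\<Sum>i<K. D n (M + i)) + (\<Sum>i<K. D n' (M + i))" by (simp add: sum.distrib)
            also have "\<dots> \<le> C" unfolding C_def using sumD[OF n1(1)] sumD[OF n1(2)] by (intro add_mono)
            finally show False using KC' by linarith
          qed
          then obtain i where "i < K" and Dsmall: "D n (M + i) + D n' (M + i) < \<eta> / 3" by blast
          define m where "m = M + i"
          have mn: "n \<le> m" "n' \<le> m" "N0 \<le> m" unfolding m_def M_def using nN by auto
          have bn: "norm (u k) \<le> L + \<eta> / 3" if "k \<ge> N0" for k using Nb that nu by simp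
          have lowD: "D p m \<ge> - 2 * \<eta> / 3" if "p \<ge> N0" "p \<le> m" for p
          proof -
            have "2 * L - D p m \<le> norm (u p + u m)" using key[of p m] that N0 by simp
            also have "\<dots> \<le> norm (u p) + norm (u m)" by (rule norm_triangle_ineq)
            also have "\<dots> \<le> 2 * L + 2 * \<eta> / 3" using bn[of p] bn[of m] that mn by simp
            finally show ?thesis by linarith
          qed
          have close: "norm (u p - u m) < \<epsilon> / 2" if "p \<ge> N0" "p \<le> m" "D p m < \<eta>" for p
          proof -
            have "norm (u p) \<le> L + \<eta>" using bn[of p] that eta by simp
            moreover have "norm (u m) \<le> L + \<eta>" using bn[of m] mn eta by simp
            moreover have "2 * L - \<eta> \<le> norm (u p + u m)" using key[of p m] that N0 by simp
            ultimately show ?thesis using UCe by blast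
          qed
          have "D n m < \<eta>" using Dsmall lowD[of n'] nN' mn unfolding m_def by simp
          then have c1: "norm (u n - u m) < \<epsilon> / 2" using close nN mn by simp
          have "D n' m < \<eta>" using Dsmall lowD[of n] nN mn unfolding m_def by simp
          then have c2: "norm (u n' - u m) < \<epsilon> / 2" using close nN' mn by simp
          have "dist (u n) (u n') \<le> dist (u n) (u m) + dist (u n') (u m)" by (rule dist_triangle2)
          then show "dist (u n) (u n') < \<epsilon>" using c1 c2 by (simp add: dist_norm)
        qed
      qed
      then show "convergent (\<lambda>n. (1 / real n) *\<^sub>R v n)"
        using Cauchy_convergent_iff unfolding u_def by blast
    qed
  next
    assume R: "\<forall>v::nat \<Rightarrow> 'a.
       (\<forall>n m. n \<ge> 1 \<longrightarrow> m \<ge> 1 \<longrightarrow> norm (v (n + m)) \<le> norm (v n + v m)) \<longrightarrow>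
       convergent (\<lambda>n. (1 / real n) *\<^sub>R v n)"
    show "convex_normed_space TYPE('a)"
    proof (rule ccontr)
      assume "\<not> convex_normed_space TYPE('a)"
      then obtain x y :: 'a where xy: "x \<noteq> y" "norm x = 1" "norm y = 1" "2 \<le> norm (x + y)"
        unfolding convex_normed_space_def by (meson not_less)
      define w where "w n = (if even n then real n *\<^sub>R x else real n *\<^sub>R y)" for n
      have "\<forall>n m. n \<ge> 1 \<longrightarrow> m \<ge> 1 \<longrightarrow> norm (w (n + m)) \<le> norm (w n + w m)"
      proof (intro allI impI)
        fix n m :: nat assume "n \<ge> 1" "m \<ge> 1"
        have lhs: "norm (w (n + m)) = real n + real m" unfolding w_def using xy by simp
        show "norm (w (n + m)) \<le> norm (w n + w m)"
        proof (cases "even n = even m")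
          case True
          then show ?thesis unfolding lhs w_def using xy
            by (auto simp: scaleR_add_left[symmetric] simp del: scaleR_add_left)
        next
          case False
          then show ?thesis unfolding lhs w_def
            using seg_norm[OF xy(2,3,4), of "real n" "real m"] seg_norm[OF xy(2,3,4), of "real m" "real n"] xy
            by (auto simp: add.commute)
        qed
      qed
      with R obtain l where l: "(\<lambda>n. (1 / real n) *\<^sub>R w n) \<longlonglongrightarrow> l"
        unfolding convergent_def by blast
      have sm1: "strict_mono (\<lambda>k::nat. 2 * k + 2)" by (auto simp: strict_mono_def)
      have sm2: "strict_mono (\<lambda>k::nat. 2 * k + 1)" by (auto simp: strict_mono_def)
      have "((\<lambda>n. (1 / real n) *\<^sub>R w n) \<circ> (\<lambda>k. 2 * k + 2)) \<longlonglongrightarrow> l"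
        using LIMSEQ_subseq_LIMSEQ[OF l sm1] .
      moreover have "((\<lambda>n. (1 / real n) *\<^sub>R w n) \<circ> (\<lambda>k. 2 * k + 2)) = (\<lambda>k. x)"
        by (rule ext) (simp add: w_def)
      ultimately have "l = x" using LIMSEQ_unique tendsto_const by metis
      have "((\<lambda>n. (1 / real n) *\<^sub>R w n) \<circ> (\<lambda>k. 2 * k + 1)) \<longlonglongrightarrow> l"
        using LIMSEQ_subseq_LIMSEQ[OF l sm2] .
      moreover have "((\<lambda>n. (1 / real n) *\<^sub>R w n) \<circ> (\<lambda>k. 2 * k + 1)) = (\<lambda>k. y)"
        by (rule ext) (simp add: w_def)
      ultimately have "l = y" using LIMSEQ_unique tendsto_const by metis
      show False using \<open>l = x\<close> \<open>l = y\<close> xy(1) by simp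
    qed
  qed
qed

end
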